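(* In the $(3,2,2)$ scenario, the correlation $p(\vec x|\vec a)=\tfrac12\delta_{\vec x,(a_3,a_1,a_2)}+\tfrac12\delta_{\vec x,(\bar a_3,\bar a_1,\bar a_2)}$ (which has $p_{\rm gynin}=1$) is probabilistically consistent — it is realized by the Baumeler–Feix–Wolf classical process $p(\vec i|\vec o)=\tfrac12\delta_{\vec i,(o_3,o_1,o_2)}+\tfrac12\delta_{\vec i,(\bar o_3,\bar o_1,\bar o_2)}$ (with $I_k=O_k=\{0,1\}$) under the local interventions $p(x_k,o_k|a_k,i_k)=\delta_{x_k,i_k}\delta_{o_k,a_k}$ — but is not deterministically consistent. Consequently the set $\mathcal{DC}$ of deterministically consistent correlations is strictly contained in the set $\mathcal{PC}$ of probabilistically consistent correlations.
   Context: $(3,2,2)$ scenario: three parties, $a_k,x_k\in\{0,1\}$, $\bar a=1\oplus a$. $p_{\rm gynin}=\frac18\sum_{\vec a}\big[p((a_3,a_1,a_2)|\vec a)+p((\bar a_3,\bar a_1,\bar a_2)|\vec a)\big]$. For finite sets $I_k,O_k$, a conditional distribution $p(\vec i|\vec o)$ is a classical process if for all finite setting/outcome sets and all local interventions $p(x_k,o_k|a_k,i_k)$, the expression $\sum_{\vec i,\vec o}\prod_kp(x_k,o_k|a_k,i_k)p(\vec i|\vec o)$ is a valid conditional distribution over $\vec x$ for every $\vec a$. A process function is $\omega:\vec O\to\vec I$ with $\delta_{\vec i,\omega(\vec o)}$ a classical process. A correlation is probabilistically consistent ($\in\mathcal{PC}$) if it equals $\sum_{\vec i,\vec o}\prod_kp(x_k,o_k|a_k,i_k)p(\vec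 i|\vec o)$ for some finite $I_k,O_k$, local interventions, and a classical process $p(\vec i|\vec o)$; it is deterministically consistent ($\in\mathcal{DC}$) if moreover $p(\vec i|\vec o)$ can be taken to be a convex combination of process functions $\delta_{\vec i,\omega(\vec o)}$. *)

theory Defs
  imports Complex_Main
begin

type_synonym vec3 = "nat \<times> nat \<times> nat"

definition cond_dist :: "('b \<Rightarrow> 'a \<Rightarrow> real) \<Rightarrow> 'b set \<Rightarrow> 'a set \<Rightarrow> bool" where
  "cond_dist p Y Z \<longleftrightarrow> (\<forall>z\<in>Z. (\<forall>y\<in>Y. 0 \<le> p y z) \<and> (\<Sum>y\<in>Y. p y z) = 1)"

text \<open>A local intervention q x o a i = p(x,o|a,i) with settings A, outcomes X,
inputs I and outputs O.\<close>
definition local_intervention ::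
  "(nat \<Rightarrow> nat \<Rightarrow> nat \<Rightarrow> nat \<Rightarrow> real) \<Rightarrow> nat set \<Rightarrow> nat set \<Rightarrow> nat set \<Rightarrow> nat set \<Rightarrow> bool" where
  "local_intervention q A X I Outs \<longleftrightarrow>
     cond_dist (\<lambda>(x, u) (a, i). q x u a i) (X \<times> Outs) (A \<times> I)"

definition induced ::
  "(nat \<Rightarrow> nat \<Rightarrow> nat \<Rightarrow> nat \<Rightarrow> real) \<Rightarrow> (nat \<Rightarrow> nat \<Rightarrow> nat \<Rightarrow> nat \<Rightarrow> real) \<Rightarrow>
   (nat \<Rightarrow> nat \<Rightarrow> nat \<Rightarrow> nat \<Rightarrow> real) \<Rightarrow> (vec3 \<Rightarrow> vec3 \<Rightarrow> real) \<Rightarrow>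
   nat set \<Rightarrow> nat set \<Rightarrow> nat set \<Rightarrow> nat set \<Rightarrow> nat set \<Rightarrow> nat set \<Rightarrow>
   vec3 \<Rightarrow> vec3 \<Rightarrow> real" where
  "induced q1 q2 q3 p I1 I2 I3 O1 O2 O3 =
     (\<lambda>(x1, x2, x3) (a1, a2, a3).
        \<Sum>(i1, i2, i3)\<in>I1 \<times> I2 \<times> I3. \<Sum>(o1, o2, o3)\<in>O1 \<times> O2 \<times> O3.
          q1 x1 o1 a1 i1 * q2 x2 o2 a2 i2 * q3 x3 o3 a3 i3 * p (i1, i2, i3) (o1, o2, o3))"

definition classical_process ::
  "(vec3 \<Rightarrow> vec3 \<Rightarrow> real) \<Rightarrow> nat set \<Rightarrow> nat set \<Rightarrow> nat set \<Rightarrow> nat set \<Rightarrow> nat set \<Rightarrow> nat set \<Rightarrow> bool" where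
  "classical_process p I1 I2 I3 O1 O2 O3 \<longleftrightarrow>
     cond_dist p (I1 \<times> I2 \<times> I3) (O1 \<times> O2 \<times> O3) \<and>
     (\<forall>A1 A2 A3 X1 X2 X3 :: nat set. \<forall>q1 q2 q3.
        finite A1 \<and> finite A2 \<and> finite A3 \<and> finite X1 \<and> finite X2 \<and> finite X3 \<and>
        local_intervention q1 A1 X1 I1 O1 \<and> local_intervention q2 A2 X2 I2 O2 \<and>
        local_intervention q3 A3 X3 I3 O3 \<longrightarrow>
        cond_dist (induced q1 q2 q3 p I1 I2 I3 O1 O2 O3) (X1 \<times> X2 \<times> X3) (A1 \<times> A2 \<times> A3))"

definition delta_proc :: "(vec3 \<Rightarrow> vec3) \<Rightarrow> vec3 \<Rightarrow> vec3 \<Rightarrow> real" where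
  "delta_proc \<omega> = (\<lambda>i u. if i = \<omega> u then 1 else 0)"

definition process_function ::
  "(vec3 \<Rightarrow> vec3) \<Rightarrow> nat set \<Rightarrow> nat set \<Rightarrow> nat set \<Rightarrow> nat set \<Rightarrow> nat set \<Rightarrow> nat set \<Rightarrow> bool" where
  "process_function \<omega> I1 I2 I3 O1 O2 O3 \<longleftrightarrow>
     (\<forall>u\<in>O1 \<times> O2 \<times> O3. \<omega> u \<in> I1 \<times> I2 \<times> I3) \<and>
     classical_process (delta_proc \<omega>) I1 I2 I3 O1 O2 O3"

definition binset :: "nat set" where "binset = {0, 1}"

definition bitvec :: "vec3 set" where "bitvec = binset \<times> binset \<times> binset"

definition bar :: "nat \<Rightarrow> nat" where "bar a = 1 - a"

type_synonym correlation = "vec3 \<Rightarrow> vec3 \<Rightarrow> real"  (* P x a = p(x|a) *)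

definition realizes ::
  "correlation \<Rightarrow> (vec3 \<Rightarrow> vec3 \<Rightarrow> real) \<Rightarrow> nat set \<Rightarrow> nat set \<Rightarrow> nat set \<Rightarrow> nat set \<Rightarrow> nat set \<Rightarrow> nat set \<Rightarrow>
   (nat \<Rightarrow> nat \<Rightarrow> nat \<Rightarrow> nat \<Rightarrow> real) \<Rightarrow> (nat \<Rightarrow> nat \<Rightarrow> nat \<Rightarrow> nat \<Rightarrow> real) \<Rightarrow>
   (nat \<Rightarrow> nat \<Rightarrow> nat \<Rightarrow> nat \<Rightarrow> real) \<Rightarrow> bool" where
  "realizes P p I1 I2 I3 O1 O2 O3 q1 q2 q3 \<longleftrightarrow>
     finite I1 \<and> finite I2 \<and> finite I3 \<and> finite O1 \<and> finite O2 \<and> finite O3 \<and>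
     I1 \<noteq> {} \<and> I2 \<noteq> {} \<and> I3 \<noteq> {} \<and> O1 \<noteq> {} \<and> O2 \<noteq> {} \<and> O3 \<noteq> {} \<and>
     classical_process p I1 I2 I3 O1 O2 O3 \<and>
     local_intervention q1 binset binset I1 O1 \<and> local_intervention q2 binset binset I2 O2 \<and>
     local_intervention q3 binset binset I3 O3 \<and>
     (\<forall>x\<in>bitvec. \<forall>a\<in>bitvec. P x a = induced q1 q2 q3 p I1 I2 I3 O1 O2 O3 x a)"

definition PC :: "correlation set" where
  "PC = {P. \<exists>p I1 I2 I3 O1 O2 O3 q1 q2 q3. realizes P p I1 I2 I3 O1 O2 O3 q1 q2 q3}"

definition DC :: "correlation set" where
  "DC = {P. \<exists>p I1 I2 I3 O1 O2 O3 q1 q2 q3. realizes P p I1 I2 I3 O1 O2 O3 q1 q2 q3 \<and>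
           (\<exists>(J :: nat set) (lam :: nat \<Rightarrow> real) (\<omega> :: nat \<Rightarrow> vec3 \<Rightarrow> vec3).
              finite J \<and> (\<forall>j\<in>J. 0 \<le> lam j \<and> process_function (\<omega> j) I1 I2 I3 O1 O2 O3) \<and>
              (\<Sum>j\<in>J. lam j) = 1 \<and>
              (\<forall>i\<in>I1 \<times> I2 \<times> I3. \<forall>u\<in>O1 \<times> O2 \<times> O3.
                  p i u = (\<Sum>j\<in>J. lam j * delta_proc (\<omega> j) i u)))}"

definition p_gynin :: "correlation \<Rightarrow> real" where
  "p_gynin P = (1/8) * (\<Sum>(a1, a2, a3)\<in>bitvec.
       P (a3, a1, a2) (a1, a2, a3) + P (bar a3, bar a1, bar a2) (a1, a2, a3))"

definition gynin_corr :: correlation where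
  "gynin_corr = (\<lambda>x (a1, a2, a3).
     (1/2) * (if x = (a3, a1, a2) then 1 else 0) +
     (1/2) * (if x = (bar a3, bar a1, bar a2) then 1 else 0))"

definition BFW :: "vec3 \<Rightarrow> vec3 \<Rightarrow> real" where
  "BFW = (\<lambda>i (o1, o2, o3).
     (1/2) * (if i = (o3, o1, o2) then 1 else 0) +
     (1/2) * (if i = (bar o3, bar o1, bar o2) then 1 else 0))"

definition copy_int :: "nat \<Rightarrow> nat \<Rightarrow> nat \<Rightarrow> nat \<Rightarrow> real" where
  "copy_int x u a i = (if x = i \<and> u = a then 1 else 0)"

end

theory Submission
  imports Defs
begin


lemma sum3: "(\<Sum>(i1,i2,i3)\<in>A\<times>B\<times>C. f i1 i2 i3) = (\<Sum>i1\<in>A. \<Sum>i2\<in>B. \<Sum>i3\<in>C. f i1 i2 i3)"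
proof -
  have "(\<Sum>i1\<in>A. \<Sum>i2\<in>B. \<Sum>i3\<in>C. f i1 i2 i3) = (\<Sum>i1\<in>A. \<Sum>(i2,i3)\<in>B\<times>C. f i1 i2 i3)"
    by (simp add: sum.cartesian_product)
  also have "\<dots> = (\<Sum>(i1,i2,i3)\<in>A\<times>B\<times>C. f i1 i2 i3)"
    by (simp add: sum.cartesian_product split_def)
  finally show ?thesis by simp
qed

lemma sum3': "(\<Sum>x\<in>A\<times>B\<times>C. f x) = (\<Sum>i1\<in>A. \<Sum>i2\<in>B. \<Sum>i3\<in>C. f (i1,i2,i3))"
  using sum3[of "\<lambda>i1 i2 i3. f (i1,i2,i3)" A B C] by (simp add: case_prod_beta)

lemma prod_sum3: "(\<Sum>x\<in>A\<times>B\<times>C. (f (fst x) * g (fst (snd x)) * h (snd (snd x)) :: real)) = sum f A * sum g B * sum h C"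
proof -
  have "sum f A * sum g B * sum h C = (\<Sum>i1\<in>A. f i1 * (sum g B * sum h C))"
    by (simp add: sum_distrib_right mult.assoc)
  also have "\<dots> = (\<Sum>i1\<in>A. \<Sum>i2\<in>B. \<Sum>i3\<in>C. f i1 * (g i2 * h i3))"
    by (simp add: sum_distrib_left sum_distrib_right sum.swap[of _ C B])
  finally show ?thesis unfolding sum3' by (simp add: mult.assoc)
qed

lemma sum_bin: "(\<Sum>x\<in>binset. f x) = f 0 + f 1" by (simp add: binset_def)

lemma bar_simps[simp]: "bar 0 = 1" "bar 1 = 0" "bar (Suc 0) = 0" by (simp_all add: bar_def)

lemma pg: "p_gynin gynin_corr = 1"
  unfolding p_gynin_def bitvec_def sum3 sum_bin
  by (simp add: gynin_corr_def)

lemma induced_marg: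
  fixes X1 X2 X3 :: "nat set"
  shows "(\<Sum>x\<in>X1\<times>X2\<times>X3. induced q1 q2 q3 p I1 I2 I3 O1 O2 O3 x (a1,a2,a3)) =
    (\<Sum>(i1,i2,i3)\<in>I1\<times>I2\<times>I3. \<Sum>(o1,o2,o3)\<in>O1\<times>O2\<times>O3.
      (\<Sum>x\<in>X1. q1 x o1 a1 i1) * (\<Sum>x\<in>X2. q2 x o2 a2 i2) * (\<Sum>x\<in>X3. q3 x o3 a3 i3) * p (i1,i2,i3) (o1,o2,o3))" (is "_ = ?rhs")
proof -
  have "(\<Sum>x\<in>X1\<times>X2\<times>X3. induced q1 q2 q3 p I1 I2 I3 O1 O2 O3 x (a1,a2,a3)) =
     (\<Sum>x\<in>X1\<times>X2\<times>X3. \<Sum>i\<in>I1\<times>I2\<times>I3. \<Sum>u\<in>O1\<times>O2\<times>O3.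
        q1 (fst x) (fst u) a1 (fst i) * q2 (fst (snd x)) (fst (snd u)) a2 (fst (snd i)) * q3 (snd (snd x)) (snd (snd u)) a3 (snd (snd i)) * p i u)"
    unfolding induced_def by (simp add: case_prod_beta)
  also have "\<dots> = (\<Sum>i\<in>I1\<times>I2\<times>I3. \<Sum>u\<in>O1\<times>O2\<times>O3. \<Sum>x\<in>X1\<times>X2\<times>X3.
        q1 (fst x) (fst u) a1 (fst i) * q2 (fst (snd x)) (fst (snd u)) a2 (fst (snd i)) * q3 (snd (snd x)) (snd (snd u)) a3 (snd (snd i)) * p i u)"
    apply (rule trans[OF sum.swap]) apply (rule sum.cong[OF refl]) by (rule sum.swap)
  also have "\<dots> = ?rhs"
    unfolding case_prod_beta
    apply (rule sum.cong, rule refl)+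
    apply (subst sum_distrib_right[symmetric]) apply (subst prod_sum3) apply simp
    done
  finally show ?thesis .
qed

lemma bfw_ident:
  fixes m1 m2 m3 :: "nat \<Rightarrow> nat \<Rightarrow> real"
  assumes "m1 (Suc 0) 0 = 1 - m1 0 0" "m1 (Suc 0) (Suc 0) = 1 - m1 0 (Suc 0)"
    "m2 (Suc 0) 0 = 1 - m2 0 0" "m2 (Suc 0) (Suc 0) = 1 - m2 0 (Suc 0)"
    "m3 (Suc 0) 0 = 1 - m3 0 0" "m3 (Suc 0) (Suc 0) = 1 - m3 0 (Suc 0)"
  shows "(\<Sum>(i1,i2,i3)\<in>bitvec. \<Sum>(o1,o2,o3)\<in>bitvec.
      m1 o1 i1 * m2 o2 i2 * m3 o3 i3 * BFW (i1,i2,i3) (o1,o2,o3)) = 1"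
  unfolding bitvec_def sum3 sum_bin using assms
  by (simp add: BFW_def) (simp add: field_simps)

lemma li_nonneg: "local_intervention q A X I Os \<Longrightarrow> a \<in> A \<Longrightarrow> i \<in> I \<Longrightarrow> x \<in> X \<Longrightarrow> u \<in> Os \<Longrightarrow> 0 \<le> q x u a i"
  unfolding local_intervention_def cond_dist_def by fastforce

lemma li_sum: "local_intervention q A X I Os \<Longrightarrow> a \<in> A \<Longrightarrow> i \<in> I \<Longrightarrow> (\<Sum>x\<in>X. \<Sum>u\<in>Os. q x u a i) = 1"
  unfolding local_intervention_def cond_dist_def
  by (auto simp: sum.cartesian_product split_def)

lemma li_bin: "local_intervention q A X I binset \<Longrightarrow> a \<in> A \<Longrightarrow> i \<in> I \<Longrightarrow> (\<Sum>x\<in>X. q x (Suc 0) a i) = 1 - (\<Sum>x\<in>X. q x 0 a i)"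
  using li_sum[of q A X I binset a i] by (simp add: sum_bin sum.distrib)

lemma bfw_classical: "classical_process BFW binset binset binset binset binset binset"
  unfolding classical_process_def
proof (intro conjI allI impI)
  show "cond_dist BFW (binset \<times> binset \<times> binset) (binset \<times> binset \<times> binset)"
    unfolding cond_dist_def sum3' sum_bin by (auto simp: binset_def BFW_def)
next
  fix A1 A2 A3 X1 X2 X3 :: "nat set" and q1 q2 q3
  assume H: "finite A1 \<and> finite A2 \<and> finite A3 \<and> finite X1 \<and> finite X2 \<and> finite X3 \<and>
        local_intervention q1 A1 X1 binset binset \<and> local_intervention q2 A2 X2 binset binset \<and>
        local_intervention q3 A3 X3 binset binset"
  show "cond_dist (induced q1 q2 q3 BFW binset binset binset binset binset binset) (X1 \<times> X2 \<times> X3) (A1 \<times> A2 \<times> A3)"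
    unfolding cond_dist_def
  proof (intro ballI conjI)
    fix a x assume a: "a \<in> A1 \<times> A2 \<times> A3" and x: "x \<in> X1 \<times> X2 \<times> X3"
    have bfw0: "0 \<le> BFW i u" for i u by (simp add: BFW_def split_def)
    obtain a1 a2 a3 where aa: "a = (a1,a2,a3)" by (cases a) auto
    obtain x1 x2 x3 where xx: "x = (x1,x2,x3)" by (cases x) auto
    show "0 \<le> induced q1 q2 q3 BFW binset binset binset binset binset binset x a"
      unfolding induced_def aa xx using a x H
      by (auto intro!: sum_nonneg mult_nonneg_nonneg bfw0 li_nonneg[where q=q1] li_nonneg[where q=q2] li_nonneg[where q=q3] simp: aa xx)
  next
    fix a assume a: "a \<in> A1 \<times> A2 \<times> A3"
    obtain a1 a2 a3 where aa: "a = (a1,a2,a3)" by (cases a) auto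
    show "(\<Sum>x\<in>X1 \<times> X2 \<times> X3. induced q1 q2 q3 BFW binset binset binset binset binset binset x a) = 1"
      unfolding aa induced_marg bitvec_def[symmetric]
      apply (rule bfw_ident)
      using H a by (auto simp: aa binset_def intro!: li_bin)
  qed
qed

lemma induced_copy:
  assumes f: "finite I1" "finite I2" "finite I3" "finite O1" "finite O2" "finite O3"
    and x: "(x1,x2,x3) \<in> I1\<times>I2\<times>I3" and a: "(a1,a2,a3) \<in> O1\<times>O2\<times>O3"
  shows "induced copy_int copy_int copy_int p I1 I2 I3 O1 O2 O3 (x1,x2,x3) (a1,a2,a3) = p (x1,x2,x3) (a1,a2,a3)"
proof -
  have "induced copy_int copy_int copy_int p I1 I2 I3 O1 O2 O3 (x1,x2,x3) (a1,a2,a3) =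
     (\<Sum>i1\<in>I1. \<Sum>i2\<in>I2. \<Sum>i3\<in>I3. \<Sum>o1\<in>O1. \<Sum>o2\<in>O2. \<Sum>o3\<in>O3.
        (if o3 = a3 then if o2 = a2 then if o1 = a1 then if i3 = x3 then if i2 = x2 then if i1 = x1 then p (i1,i2,i3) (o1,o2,o3) else 0 else 0 else 0 else 0 else 0 else 0))"
    unfolding induced_def sum3 prod.case by (intro sum.cong refl) (auto simp: copy_int_def)
  also have "\<dots> = p (x1,x2,x3) (a1,a2,a3)"
    using f x a by (simp add: sum.delta sum.delta')
  finally show ?thesis .
qed

lemma copy_li: "local_intervention copy_int binset binset binset binset"
  unfolding local_intervention_def cond_dist_def binset_def
  by (auto simp: copy_int_def)

lemma realizes_gyn: "realizes gynin_corr BFW binset binset binset binset binset binset copy_int copy_int copy_int"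
  unfolding realizes_def
proof (intro conjI ballI)
  fix x a assume "x \<in> bitvec" "a \<in> bitvec"
  then show "gynin_corr x a = induced copy_int copy_int copy_int BFW binset binset binset binset binset binset x a"
    unfolding bitvec_def
    by (auto simp: induced_copy binset_def gynin_corr_def BFW_def)
qed (fact bfw_classical | fact copy_li | simp add: binset_def)+



definition xx1 :: "(bool\<times>bool\<times>bool \<Rightarrow> bool) \<Rightarrow> bool \<Rightarrow> bool \<Rightarrow> bool \<Rightarrow> bool" where
  "xx1 w a1 a2 a3 = (if w (a1,a2,a3) then a3 else \<not> a3)"
definition xx2 :: "(bool\<times>bool\<times>bool \<Rightarrow> bool) \<Rightarrow> bool \<Rightarrow> bool \<Rightarrow> bool \<Rightarrow> bool" where
  "xx2 w a1 a2 a3 = (if w (a1,a2,a3) then a1 else \<not> a1)"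
definition xx3 :: "(bool\<times>bool\<times>bool \<Rightarrow> bool) \<Rightarrow> bool \<Rightarrow> bool \<Rightarrow> bool \<Rightarrow> bool" where
  "xx3 w a1 a2 a3 = (if w (a1,a2,a3) then a2 else \<not> a2)"

lemma ex1_none: "\<exists>!x. P x \<Longrightarrow> \<not> P (False,False,False) \<Longrightarrow> \<not> P (False,False,True) \<Longrightarrow> \<not> P (False,True,False) \<Longrightarrow> \<not> P (False,True,True)
  \<Longrightarrow> \<not> P (True,False,False) \<Longrightarrow> \<not> P (True,False,True) \<Longrightarrow> \<not> P (True,True,False) \<Longrightarrow> \<not> P (True,True,True) \<Longrightarrow> False"
  by (metis (full_types) prod_cases3)

lemma ex1_two: "\<exists>!x. P x \<Longrightarrow> P a \<Longrightarrow> P b \<Longrightarrow> a \<noteq> b \<Longrightarrow> False"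
  by blast

lemma comb:
  fixes w :: "bool\<times>bool\<times>bool \<Rightarrow> bool"
  assumes "\<exists>!a. case a of (a1,a2,a3) \<Rightarrow> a1 = xx1 w True a2 a3 \<and> a2 = xx2 w a1 False a3 \<and> a3 = xx3 w a1 a2 False"
    and "\<exists>!a. case a of (a1,a2,a3) \<Rightarrow> a1 = (\<not> xx1 w True a2 a3) \<and> a2 = (\<not> xx2 w a1 False a3) \<and> a3 = (\<not> xx3 w a1 a2 False)"
    and "\<exists>!a. case a of (a1,a2,a3) \<Rightarrow> a1 = (xx1 w False a2 a3 = xx1 w True a2 a3) \<and> \<not> a2 \<and>
                 a3 = (xx3 w a1 a2 False = xx3 w a1 a2 True)"
  shows False
  proof (cases "w (False,False,False)")
    case True note h1 = this
    show False
    proof (cases "w (True,False,False)")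
      case True note h2 = this
      show False
      proof (cases "w (True,True,False)")
        case True note h3 = this
        show False
        proof (cases "w (False,False,True)")
          case True note h4 = this
          show False
          proof (cases "w (True,False,True)")
            case True note h5 = this
            show False
            proof (cases "w (True,True,True)")
              case True note h6 = this
              show False apply (rule ex1_two[OF assms(1), of "(False,False,False)" "(True,True,True)"]) using h1 h2 h3 h4 h5 h6 by (simp_all add: xx1_def xx2_def xx3_def)
            next
              case False note h7 = this
              show False apply (rule ex1_none[OF assms(2)]) using h1 h2 h3 h4 h5 h7 by (simp_all add: xx1_def xx2_def xx3_def)
            qed
          next
            case False note h8 = this
            show False apply (rule ex1_two[OF assms(3), of "(False,False,True)" "(True,False,False)"]) using h1 h2 h3 h4 h8 by (simp_all add: xx1_def xx2_def xx3_def)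
          qed
        next
          case False note h9 = this
          show False
          proof (cases "w (True,False,True)")
            case True note h10 = this
            show False apply (rule ex1_none[OF assms(3)]) using h1 h2 h3 h9 h10 by (simp_all add: xx1_def xx2_def xx3_def)
          next
            case False note h11 = this
            show False apply (rule ex1_none[OF assms(2)]) using h1 h2 h3 h9 h11 by (simp_all add: xx1_def xx2_def xx3_def)
          qed
        qed
      next
        case False note h12 = this
        show False apply (rule ex1_two[OF assms(1), of "(False,False,False)" "(True,True,False)"]) using h1 h2 h12 by (simp_all add: xx1_def xx2_def xx3_def)
      qed
    next
      case False note h13 = this
      show False
      proof (cases "w (False,False,True)")
        case True note h14 = this
        show False
        proof (cases "w (True,False,True)")
          case True note h15 = this
          show False apply (rule ex1_none[OF assms(3)]) using h1 h13 h14 h15 by (simp_all add: xx1_def xx2_def xx3_def)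
        next
          case False note h16 = this
          show False apply (rule ex1_none[OF assms(1)]) using h1 h13 h14 h16 by (simp_all add: xx1_def xx2_def xx3_def)
        qed
      next
        case False note h17 = this
        show False
        proof (cases "w (True,False,True)")
          case True note h18 = this
          show False
          proof (cases "w (True,True,False)")
            case True note h19 = this
            show False apply (rule ex1_two[OF assms(2), of "(False,False,True)" "(True,True,False)"]) using h1 h13 h17 h18 h19 by (simp_all add: xx1_def xx2_def xx3_def)
          next
            case False note h20 = this
            show False
            proof (cases "w (False,True,False)")
              case True note h21 = this
              show False apply (rule ex1_two[OF assms(2), of "(False,False,True)" "(False,True,False)"]) using h1 h13 h17 h18 h20 h21 by (simp_all add: xx1_def xx2_def xx3_def)
            next
              case False note h22 = this
              show False apply (rule ex1_none[OF assms(1)]) using h1 h13 h17 h18 h20 h22 by (simp_all add: xx1_def xx2_def xx3_def)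
            qed
          qed
        next
          case False note h23 = this
          show False apply (rule ex1_two[OF assms(3), of "(False,False,False)" "(True,False,True)"]) using h1 h13 h17 h23 by (simp_all add: xx1_def xx2_def xx3_def)
        qed
      qed
    qed
  next
    case False note h24 = this
    show False
    proof (cases "w (True,False,False)")
      case True note h25 = this
      show False
      proof (cases "w (False,False,True)")
        case True note h26 = this
        show False
        proof (cases "w (True,False,True)")
          case True note h27 = this
          show False apply (rule ex1_two[OF assms(3), of "(False,False,False)" "(True,False,True)"]) using h24 h25 h26 h27 by (simp_all add: xx1_def xx2_def xx3_def)
        next
          case False note h28 = this
          show False
          proof (cases "w (True,True,False)")
            case True note h29 = this
            show False
            proof (cases "w (False,True,False)")
              case True note h30 = this
              show False apply (rule ex1_none[OF assms(2)]) using h24 h25 h26 h28 h29 h30 by (simp_all add: xx1_def xx2_def xx3_def)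
            next
              case False note h31 = this
              show False apply (rule ex1_two[OF assms(1), of "(False,False,True)" "(False,True,False)"]) using h24 h25 h26 h28 h29 h31 by (simp_all add: xx1_def xx2_def xx3_def)
            qed
          next
            case False note h32 = this
            show False apply (rule ex1_two[OF assms(1), of "(False,False,True)" "(True,True,False)"]) using h24 h25 h26 h28 h32 by (simp_all add: xx1_def xx2_def xx3_def)
          qed
        qed
      next
        case False note h33 = this
        show False
        proof (cases "w (True,False,True)")
          case True note h34 = this
          show False apply (rule ex1_none[OF assms(2)]) using h24 h25 h33 h34 by (simp_all add: xx1_def xx2_def xx3_def)
        next
          case False note h35 = this
          show False apply (rule ex1_none[OF assms(3)]) using h24 h25 h33 h35 by (simp_all add: xx1_def xx2_def xx3_def)
        qed
      qed
    next
      case False note h36 = this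
      show False
      proof (cases "w (True,True,False)")
        case True note h37 = this
        show False apply (rule ex1_two[OF assms(2), of "(False,False,False)" "(True,True,False)"]) using h24 h36 h37 by (simp_all add: xx1_def xx2_def xx3_def)
      next
        case False note h38 = this
        show False
        proof (cases "w (False,False,True)")
          case True note h39 = this
          show False
          proof (cases "w (True,False,True)")
            case True note h40 = this
            show False apply (rule ex1_none[OF assms(1)]) using h24 h36 h38 h39 h40 by (simp_all add: xx1_def xx2_def xx3_def)
          next
            case False note h41 = this
            show False apply (rule ex1_none[OF assms(3)]) using h24 h36 h38 h39 h41 by (simp_all add: xx1_def xx2_def xx3_def)
          qed
        next
          case False note h42 = this
          show False
          proof (cases "w (True,False,True)")
            case True note h43 = this
            show False apply (rule ex1_two[OF assms(3), of "(False,False,True)" "(True,False,False)"]) using h24 h36 h38 h42 h43 by (simp_all add: xx1_def xx2_def xx3_def)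
          next
            case False note h44 = this
            show False
            proof (cases "w (True,True,True)")
              case True note h45 = this
              show False apply (rule ex1_none[OF assms(1)]) using h24 h36 h38 h42 h44 h45 by (simp_all add: xx1_def xx2_def xx3_def)
            next
              case False note h46 = this
              show False apply (rule ex1_two[OF assms(2), of "(False,False,False)" "(True,True,True)"]) using h24 h36 h38 h42 h44 h46 by (simp_all add: xx1_def xx2_def xx3_def)
            qed
          qed
        qed
      qed
    qed
  qed



lemma sum_single_prod: "(\<Sum>y\<in>{a}\<times>S. f y) = (\<Sum>u\<in>S. f (a,u))"
proof -
  have "{a}\<times>S = Pair a ` S" by auto
  moreover have "inj_on (Pair a) S" by (auto simp: inj_on_def)
  ultimately show ?thesis by (simp add: sum.reindex)
qed

lemma pf_unique:
  assumes pf: "process_function \<omega> I1 I2 I3 O1 O2 O3"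
    and fin: "finite I1" "finite I2" "finite I3" "finite O1" "finite O2" "finite O3"
    and G: "\<forall>i\<in>I1. G1 i \<in> O1" "\<forall>i\<in>I2. G2 i \<in> O2" "\<forall>i\<in>I3. G3 i \<in> O3"
  shows "\<exists>!u. u \<in> O1\<times>O2\<times>O3 \<and> u = (G1 (fst (\<omega> u)), G2 (fst (snd (\<omega> u))), G3 (snd (snd (\<omega> u))))"
proof -
  define Gv where "Gv = (\<lambda>i. (G1 (fst i), G2 (fst (snd i)), G3 (snd (snd i))))"
  define q1 where "q1 = (\<lambda>(x::nat) u (a::nat) i. if u = G1 i then 1 else (0::real))"
  define q2 where "q2 = (\<lambda>(x::nat) u (a::nat) i. if u = G2 i then 1 else (0::real))"
  define q3 where "q3 = (\<lambda>(x::nat) u (a::nat) i. if u = G3 i then 1 else (0::real))"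
  have cp: "classical_process (delta_proc \<omega>) I1 I2 I3 O1 O2 O3" and om: "\<forall>u\<in>O1\<times>O2\<times>O3. \<omega> u \<in> I1\<times>I2\<times>I3"
    using pf unfolding process_function_def by auto
  have li1: "local_intervention q1 {0} {0} I1 O1"
    unfolding local_intervention_def cond_dist_def q1_def using G fin
    by (clarsimp simp: sum_single_prod)
  have li2: "local_intervention q2 {0} {0} I2 O2"
    unfolding local_intervention_def cond_dist_def q2_def using G fin
    by (clarsimp simp: sum_single_prod)
  have li3: "local_intervention q3 {0} {0} I3 O3"
    unfolding local_intervention_def cond_dist_def q3_def using G fin
    by (clarsimp simp: sum_single_prod)
  have "cond_dist (induced q1 q2 q3 (delta_proc \<omega>) I1 I2 I3 O1 O2 O3) ({0}\<times>{0}\<times>{0}) ({0}\<times>{0}\<times>{0})"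
    using cp[unfolded classical_process_def, THEN conjunct2, rule_format, of "{0}" "{0}" "{0}" "{0}" "{0}" "{0}" q1 q2 q3] li1 li2 li3 by simp
  hence "induced q1 q2 q3 (delta_proc \<omega>) I1 I2 I3 O1 O2 O3 (0,0,0) (0,0,0) = 1"
    unfolding cond_dist_def by simp
  moreover have "induced q1 q2 q3 (delta_proc \<omega>) I1 I2 I3 O1 O2 O3 (0,0,0) (0,0,0) =
      (\<Sum>i\<in>I1\<times>I2\<times>I3. \<Sum>u\<in>O1\<times>O2\<times>O3. if i = \<omega> u \<and> u = Gv i then 1 else 0)"
    unfolding induced_def prod.case
    apply (rule sum.cong[OF refl]) apply (clarsimp simp: q1_def q2_def q3_def delta_proc_def Gv_def)
    apply (rule sum.cong[OF refl]) by (auto simp: prod_eq_iff)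
  moreover have "\<dots> = (\<Sum>u\<in>O1\<times>O2\<times>O3. \<Sum>i\<in>I1\<times>I2\<times>I3. if i = \<omega> u \<and> u = Gv i then 1 else 0)"
    by (rule sum.swap)
  moreover have "\<dots> = (\<Sum>u\<in>O1\<times>O2\<times>O3. if u = Gv (\<omega> u) then 1 else 0)"
  proof (rule sum.cong[OF refl])
    fix u assume "u \<in> O1\<times>O2\<times>O3"
    hence "\<omega> u \<in> I1\<times>I2\<times>I3" using om by blast
    thus "(\<Sum>i\<in>I1\<times>I2\<times>I3. if i = \<omega> u \<and> u = Gv i then 1 else (0::real)) = (if u = Gv (\<omega> u) then 1 else 0)"
    proof -
      have "(\<Sum>i\<in>I1\<times>I2\<times>I3. if i = \<omega> u \<and> u = Gv i then 1 else (0::real)) =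
         (\<Sum>i\<in>I1\<times>I2\<times>I3. if i = \<omega> u then (if u = Gv i then 1 else 0) else 0)"
        by (rule sum.cong) auto
      also have "\<dots> = (if u = Gv (\<omega> u) then 1 else 0)"
        using fin \<open>\<omega> u \<in> I1\<times>I2\<times>I3\<close> by (simp add: sum.delta)
      finally show ?thesis .
    qed
  qed
  moreover have "\<dots> = real (card {u\<in>O1\<times>O2\<times>O3. u = Gv (\<omega> u)})"
    using fin by (simp add: sum.inter_filter[symmetric])
  ultimately have "card {u\<in>O1\<times>O2\<times>O3. u = Gv (\<omega> u)} = 1" by simp
  then obtain v where S: "{u\<in>O1\<times>O2\<times>O3. u = Gv (\<omega> u)} = {v}" by (auto simp: card_1_singleton_iff)
  have "\<exists>!u. u \<in> O1\<times>O2\<times>O3 \<and> u = Gv (\<omega> u)"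
  proof (rule ex1I[of _ v])
    show "v \<in> O1\<times>O2\<times>O3 \<and> v = Gv (\<omega> v)" using S by blast
    fix u assume "u \<in> O1\<times>O2\<times>O3 \<and> u = Gv (\<omega> u)" thus "u = v" using S by blast
  qed
  thus ?thesis by (simp add: Gv_def)
qed

lemma of_bool_bin: "x \<in> binset \<Longrightarrow> \<exists>b. x = of_bool b"
  by (auto simp: binset_def intro: exI[of _ True] exI[of _ False])

lemma ss_aux: assumes "of_bool b = (if f (of_bool b) = f 0 then 1 else (0::nat))" shows "f 0 = f 1"
  using assms by (cases b) (auto split: if_splits)

lemma no_perfect:
  assumes pf: "process_function \<omega> I1 I2 I3 O1 O2 O3"
    and fin: "finite I1" "finite I2" "finite I3" "finite O1" "finite O2" "finite O3"
    and g1: "\<forall>a\<in>binset. \<forall>i\<in>I1. g1 a i \<in> O1"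
    and g2: "\<forall>a\<in>binset. \<forall>i\<in>I2. g2 a i \<in> O2"
    and g3: "\<forall>a\<in>binset. \<forall>i\<in>I3. g3 a i \<in> O3"
    and h1: "\<forall>a\<in>binset. \<forall>i\<in>I1. h1 a i \<in> binset"
    and h2: "\<forall>a\<in>binset. \<forall>i\<in>I2. h2 a i \<in> binset"
    and h3: "\<forall>a\<in>binset. \<forall>i\<in>I3. h3 a i \<in> binset"
    and win: "\<And>a1 a2 a3 u. a1 \<in> binset \<Longrightarrow> a2 \<in> binset \<Longrightarrow> a3 \<in> binset \<Longrightarrow> u \<in> O1\<times>O2\<times>O3 \<Longrightarrow>
        u = (g1 a1 (fst (\<omega> u)), g2 a2 (fst (snd (\<omega> u))), g3 a3 (snd (snd (\<omega> u)))) \<Longrightarrow>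
        (h1 a1 (fst (\<omega> u)), h2 a2 (fst (snd (\<omega> u))), h3 a3 (snd (snd (\<omega> u)))) \<in> {(a3,a1,a2), (bar a3, bar a1, bar a2)}"
  shows False
proof -
  have om: "\<And>u. u \<in> O1\<times>O2\<times>O3 \<Longrightarrow> \<omega> u \<in> I1\<times>I2\<times>I3"
    using pf unfolding process_function_def by auto
  define fp where "fp = (\<lambda>a1 a2 a3 u. u \<in> O1\<times>O2\<times>O3 \<and> u = (g1 a1 (fst (\<omega> u)), g2 a2 (fst (snd (\<omega> u))), g3 a3 (snd (snd (\<omega> u)))))"
  have ex1: "\<exists>!u. fp a1 a2 a3 u" if "a1 \<in> binset" "a2 \<in> binset" "a3 \<in> binset" for a1 a2 a3
    unfolding fp_def by (rule pf_unique[OF pf fin]) (use that g1 g2 g3 in auto)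
  define ou where "ou = (\<lambda>a1 a2 a3. THE u. fp a1 a2 a3 u)"
  have fp_ou: "fp a1 a2 a3 (ou a1 a2 a3)" if "a1 \<in> binset" "a2 \<in> binset" "a3 \<in> binset" for a1 a2 a3
    unfolding ou_def by (rule theI') (rule ex1[OF that])
  have ou_eq: "u = ou a1 a2 a3" if "a1 \<in> binset" "a2 \<in> binset" "a3 \<in> binset" "fp a1 a2 a3 u" for a1 a2 a3 u
    unfolding ou_def by (rule the1_equality[symmetric]) (rule ex1[OF that(1-3)], rule that(4))
  define s1 where "s1 = (\<lambda>a1 a2 a3. fst (\<omega> (ou a1 a2 a3)))"
  define s2 where "s2 = (\<lambda>a1 a2 a3. fst (snd (\<omega> (ou a1 a2 a3))))"
  define s3 where "s3 = (\<lambda>a1 a2 a3. snd (snd (\<omega> (ou a1 a2 a3))))"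
  have sI: "s1 a1 a2 a3 \<in> I1 \<and> s2 a1 a2 a3 \<in> I2 \<and> s3 a1 a2 a3 \<in> I3"
    if "a1 \<in> binset" "a2 \<in> binset" "a3 \<in> binset" for a1 a2 a3
    using om[of "ou a1 a2 a3"] fp_ou[OF that] unfolding fp_def s1_def s2_def s3_def by (auto simp: mem_Times_iff)
  have P: "\<exists>!b. case b of (b1,b2,b3) \<Rightarrow>
        of_bool b1 = \<phi>1 (s1 (of_bool b1) (of_bool b2) (of_bool b3)) \<and>
        of_bool b2 = \<phi>2 (s2 (of_bool b1) (of_bool b2) (of_bool b3)) \<and>
        of_bool b3 = \<phi>3 (s3 (of_bool b1) (of_bool b2) (of_bool b3))"
    if p1: "\<forall>i\<in>I1. \<phi>1 i \<in> binset" and p2: "\<forall>i\<in>I2. \<phi>2 i \<in> binset" and p3: "\<forall>i\<in>I3. \<phi>3 i \<in> binset"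
    for \<phi>1 \<phi>2 \<phi>3 :: "nat \<Rightarrow> nat"
  proof -
    have U: "\<exists>!u. u \<in> O1\<times>O2\<times>O3 \<and> u = ((\<lambda>i. g1 (\<phi>1 i) i) (fst (\<omega> u)), (\<lambda>i. g2 (\<phi>2 i) i) (fst (snd (\<omega> u))), (\<lambda>i. g3 (\<phi>3 i) i) (snd (snd (\<omega> u))))"
      by (rule pf_unique[OF pf fin]) (use p1 p2 p3 g1 g2 g3 in auto)
    then obtain u where u: "u \<in> O1\<times>O2\<times>O3" "u = (g1 (\<phi>1 (fst (\<omega> u))) (fst (\<omega> u)), g2 (\<phi>2 (fst (snd (\<omega> u)))) (fst (snd (\<omega> u))), g3 (\<phi>3 (snd (snd (\<omega> u)))) (snd (snd (\<omega> u))))"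
      by auto
    have wu: "\<omega> u \<in> I1\<times>I2\<times>I3" using om u(1) .
    define a1 where "a1 = \<phi>1 (fst (\<omega> u))"
    define a2 where "a2 = \<phi>2 (fst (snd (\<omega> u)))"
    define a3 where "a3 = \<phi>3 (snd (snd (\<omega> u)))"
    have ab: "a1 \<in> binset" "a2 \<in> binset" "a3 \<in> binset" using wu p1 p2 p3 by (auto simp: a1_def a2_def a3_def mem_Times_iff)
    have "fp a1 a2 a3 u" unfolding fp_def a1_def a2_def a3_def using u by simp
    hence uou: "u = ou a1 a2 a3" using ou_eq ab by blast
    obtain b1 b2 b3 where bb: "a1 = of_bool b1" "a2 = of_bool b2" "a3 = of_bool b3" using ab of_bool_bin by metis
    show ?thesis
    proof (rule ex1I[of _ "(b1,b2,b3)"])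
      show "case (b1,b2,b3) of (b1,b2,b3) \<Rightarrow>
        of_bool b1 = \<phi>1 (s1 (of_bool b1) (of_bool b2) (of_bool b3)) \<and>
        of_bool b2 = \<phi>2 (s2 (of_bool b1) (of_bool b2) (of_bool b3)) \<and>
        of_bool b3 = \<phi>3 (s3 (of_bool b1) (of_bool b2) (of_bool b3))"
        apply (simp only: prod.case) unfolding bb[symmetric] s1_def s2_def s3_def uou[symmetric]
        by (simp only: a1_def a2_def a3_def)
    next
      fix c assume c: "case c of (b1,b2,b3) \<Rightarrow>
        of_bool b1 = \<phi>1 (s1 (of_bool b1) (of_bool b2) (of_bool b3)) \<and>
        of_bool b2 = \<phi>2 (s2 (of_bool b1) (of_bool b2) (of_bool b3)) \<and>
        of_bool b3 = \<phi>3 (s3 (of_bool b1) (of_bool b2) (of_bool b3))"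
      obtain c1 c2 c3 where cc: "c = (c1,c2,c3)" by (cases c) auto
      let ?a1 = "of_bool c1 :: nat" and ?a2 = "of_bool c2 :: nat" and ?a3 = "of_bool c3 :: nat"
      have cb: "?a1 \<in> binset" "?a2 \<in> binset" "?a3 \<in> binset" by (auto simp: binset_def)
      define v where "v = ou ?a1 ?a2 ?a3"
      have fpv: "v \<in> O1\<times>O2\<times>O3 \<and> v = (g1 ?a1 (fst (\<omega> v)), g2 ?a2 (fst (snd (\<omega> v))), g3 ?a3 (snd (snd (\<omega> v))))"
        using fp_ou[OF cb] unfolding fp_def v_def[symmetric] .
      have c': "?a1 = \<phi>1 (fst (\<omega> v)) \<and> ?a2 = \<phi>2 (fst (snd (\<omega> v))) \<and> ?a3 = \<phi>3 (snd (snd (\<omega> v)))"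
        using c unfolding cc prod.case s1_def s2_def s3_def v_def[symmetric] .
      have "v \<in> O1\<times>O2\<times>O3 \<and> v = ((\<lambda>i. g1 (\<phi>1 i) i) (fst (\<omega> v)), (\<lambda>i. g2 (\<phi>2 i) i) (fst (snd (\<omega> v))), (\<lambda>i. g3 (\<phi>3 i) i) (snd (snd (\<omega> v))))"
        using fpv c' by (simp only:)
      hence "v = u" using U u by blast
      hence "?a1 = a1 \<and> ?a2 = a2 \<and> ?a3 = a3"
        using c' unfolding a1_def a2_def a3_def by (simp only:)
      thus "c = (b1,b2,b3)" unfolding cc bb by (auto simp: of_bool_def split: if_splits)
    qed
  qed
  have binI: "(0::nat) \<in> binset" "(1::nat) \<in> binset" "of_bool b \<in> binset" for b
    by (auto simp: binset_def)
  \<comment> \<open>no signalling to oneself\<close>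
  have ss1: "s1 0 a2 a3 = s1 1 a2 a3" if "a2 \<in> binset" "a3 \<in> binset" for a2 a3
  proof -
    have "\<exists>!b. case b of (b1,b2,b3) \<Rightarrow> of_bool b1 = (\<lambda>i. if i = s1 0 a2 a3 then 1 else (0::nat)) (s1 (of_bool b1) (of_bool b2) (of_bool b3)) \<and>
        of_bool b2 = (\<lambda>_. a2) (s2 (of_bool b1) (of_bool b2) (of_bool b3)) \<and> of_bool b3 = (\<lambda>_. a3) (s3 (of_bool b1) (of_bool b2) (of_bool b3))"
      by (rule P[of "\<lambda>i. if i = s1 0 a2 a3 then 1 else 0" "\<lambda>_. a2" "\<lambda>_. a3"]) (use that in \<open>auto simp: binset_def\<close>)
    then obtain b where hb: "case b of (b1,b2,b3) \<Rightarrow> of_bool b1 = (\<lambda>i. if i = s1 0 a2 a3 then 1 else (0::nat)) (s1 (of_bool b1) (of_bool b2) (of_bool b3)) \<and>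
        of_bool b2 = (\<lambda>_. a2) (s2 (of_bool b1) (of_bool b2) (of_bool b3)) \<and> of_bool b3 = (\<lambda>_. a3) (s3 (of_bool b1) (of_bool b2) (of_bool b3))"
      by blast
    obtain b1 b2 b3 where hb3: "b = (b1,b2,b3)" by (cases b)
    have bbc: "of_bool b1 = (if s1 (of_bool b1) (of_bool b2) (of_bool b3) = s1 0 a2 a3 then 1 else (0::nat)) \<and> of_bool b2 = a2 \<and> of_bool b3 = a3" using hb unfolding hb3 prod.case .
    note bb = bbc[THEN conjunct1] bbc[THEN conjunct2, THEN conjunct1] bbc[THEN conjunct2, THEN conjunct2]
    show ?thesis by (rule ss_aux[of b1 "\<lambda>t. s1 t a2 a3", OF bb(1)[unfolded bb(2) bb(3)]])
  qed
  have ss2: "s2 a1 0 a3 = s2 a1 1 a3" if "a1 \<in> binset" "a3 \<in> binset" for a1 a3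
  proof -
    have "\<exists>!b. case b of (b1,b2,b3) \<Rightarrow> of_bool b1 = (\<lambda>_. a1) (s1 (of_bool b1) (of_bool b2) (of_bool b3)) \<and>
        of_bool b2 = (\<lambda>i. if i = s2 a1 0 a3 then 1 else (0::nat)) (s2 (of_bool b1) (of_bool b2) (of_bool b3)) \<and> of_bool b3 = (\<lambda>_. a3) (s3 (of_bool b1) (of_bool b2) (of_bool b3))"
      by (rule P[of "\<lambda>_. a1" "\<lambda>i. if i = s2 a1 0 a3 then 1 else 0" "\<lambda>_. a3"]) (use that in \<open>auto simp: binset_def\<close>)
    then obtain b where hb: "case b of (b1,b2,b3) \<Rightarrow> of_bool b1 = (\<lambda>_. a1) (s1 (of_bool b1) (of_bool b2) (of_bool b3)) \<and>
        of_bool b2 = (\<lambda>i. if i = s2 a1 0 a3 then 1 else (0::nat)) (s2 (of_bool b1) (of_bool b2) (of_bool b3)) \<and> of_bool b3 = (\<lambda>_. a3) (s3 (of_bool b1) (of_bool b2) (of_bool b3))"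
      by blast
    obtain b1 b2 b3 where hb3: "b = (b1,b2,b3)" by (cases b)
    have bbc: "of_bool b1 = a1 \<and> of_bool b2 = (if s2 (of_bool b1) (of_bool b2) (of_bool b3) = s2 a1 0 a3 then 1 else (0::nat)) \<and> of_bool b3 = a3" using hb unfolding hb3 prod.case .
    note bb = bbc[THEN conjunct1] bbc[THEN conjunct2, THEN conjunct1] bbc[THEN conjunct2, THEN conjunct2]
    show ?thesis by (rule ss_aux[of b2 "\<lambda>t. s2 a1 t a3", OF bb(2)[unfolded bb(1) bb(3)]])
  qed
  have ss3: "s3 a1 a2 0 = s3 a1 a2 1" if "a1 \<in> binset" "a2 \<in> binset" for a1 a2
  proof -
    have "\<exists>!b. case b of (b1,b2,b3) \<Rightarrow> of_bool b1 = (\<lambda>_. a1) (s1 (of_bool b1) (of_bool b2) (of_bool b3)) \<and>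
        of_bool b2 = (\<lambda>_. a2) (s2 (of_bool b1) (of_bool b2) (of_bool b3)) \<and> of_bool b3 = (\<lambda>i. if i = s3 a1 a2 0 then 1 else (0::nat)) (s3 (of_bool b1) (of_bool b2) (of_bool b3))"
      by (rule P[of "\<lambda>_. a1" "\<lambda>_. a2" "\<lambda>i. if i = s3 a1 a2 0 then 1 else 0"]) (use that in \<open>auto simp: binset_def\<close>)
    then obtain b where hb: "case b of (b1,b2,b3) \<Rightarrow> of_bool b1 = (\<lambda>_. a1) (s1 (of_bool b1) (of_bool b2) (of_bool b3)) \<and>
        of_bool b2 = (\<lambda>_. a2) (s2 (of_bool b1) (of_bool b2) (of_bool b3)) \<and> of_bool b3 = (\<lambda>i. if i = s3 a1 a2 0 then 1 else (0::nat)) (s3 (of_bool b1) (of_bool b2) (of_bool b3))"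
      by blast
    obtain b1 b2 b3 where hb3: "b = (b1,b2,b3)" by (cases b)
    have bbc: "of_bool b1 = a1 \<and> of_bool b2 = a2 \<and> of_bool b3 = (if s3 (of_bool b1) (of_bool b2) (of_bool b3) = s3 a1 a2 0 then 1 else (0::nat))" using hb unfolding hb3 prod.case .
    note bb = bbc[THEN conjunct1] bbc[THEN conjunct2, THEN conjunct1] bbc[THEN conjunct2, THEN conjunct2]
    show ?thesis by (rule ss_aux[of b3 "\<lambda>t. s3 a1 a2 t", OF bb(3)[unfolded bb(1) bb(2)]])
  qed
  have W: "(h1 a1 (s1 a1 a2 a3), h2 a2 (s2 a1 a2 a3), h3 a3 (s3 a1 a2 a3)) \<in> {(a3,a1,a2),(bar a3,bar a1,bar a2)}"
    if "a1 \<in> binset" "a2 \<in> binset" "a3 \<in> binset" for a1 a2 a3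
  proof -
    have f: "fp a1 a2 a3 (ou a1 a2 a3)" by (rule fp_ou[OF that])
    show ?thesis unfolding s1_def s2_def s3_def
      by (rule win[OF that f[unfolded fp_def, THEN conjunct1] f[unfolded fp_def, THEN conjunct2]])
  qed
  have ss1': "s1 (of_bool c) x y = s1 0 x y" if "x \<in> binset" "y \<in> binset" for c x y
    using ss1[OF that] by (cases c) simp_all
  have ss2': "s2 x (of_bool c) y = s2 x 0 y" if "x \<in> binset" "y \<in> binset" for c x y
    using ss2[OF that] by (cases c) simp_all
  have ss3': "s3 x y (of_bool c) = s3 x y 0" if "x \<in> binset" "y \<in> binset" for c x y
    using ss3[OF that] by (cases c) simp_all
  have barb: "bar (of_bool b) = of_bool (\<not> b)" for b by (cases b) simp_all
  define w where "w = (\<lambda>(b1,b2,b3). h1 (of_bool b1) (s1 (of_bool b1) (of_bool b2) (of_bool b3)) = (of_bool b3::nat))"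
  have Y: "h1 (of_bool b1) (s1 (of_bool b1) (of_bool b2) (of_bool b3)) = of_bool (xx1 w b1 b2 b3) \<and>
           h2 (of_bool b2) (s2 (of_bool b1) (of_bool b2) (of_bool b3)) = of_bool (xx2 w b1 b2 b3) \<and>
           h3 (of_bool b3) (s3 (of_bool b1) (of_bool b2) (of_bool b3)) = of_bool (xx3 w b1 b2 b3)" for b1 b2 b3
    using W[OF binI(3) binI(3) binI(3), of b1 b2 b3]
    unfolding xx1_def xx2_def xx3_def w_def barb by (cases b3) auto
  have Y1: "h1 (of_bool c) (s1 (of_bool b1) (of_bool b2) (of_bool b3)) = of_bool (xx1 w c b2 b3)" for c b1 b2 b3
    using Y[of c b2 b3] ss1'[where c=b1 and x="of_bool b2" and y="of_bool b3", OF binI(3) binI(3)] ss1'[where c=c and x="of_bool b2" and y="of_bool b3", OF binI(3) binI(3)] by simp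
  have Y2: "h2 (of_bool c) (s2 (of_bool b1) (of_bool b2) (of_bool b3)) = of_bool (xx2 w b1 c b3)" for c b1 b2 b3
    using Y[of b1 c b3] ss2'[where c=b2 and x="of_bool b1" and y="of_bool b3", OF binI(3) binI(3)] ss2'[where c=c and x="of_bool b1" and y="of_bool b3", OF binI(3) binI(3)] by simp
  have Y3: "h3 (of_bool c) (s3 (of_bool b1) (of_bool b2) (of_bool b3)) = of_bool (xx3 w b1 b2 c)" for c b1 b2 b3
    using Y[of b1 b2 c] ss3'[where c=b3 and x="of_bool b1" and y="of_bool b2", OF binI(3) binI(3)] ss3'[where c=c and x="of_bool b1" and y="of_bool b2", OF binI(3) binI(3)] by simp
  have Y1F: "h1 0 (s1 (of_bool b1) (of_bool b2) (of_bool b3)) = of_bool (xx1 w False b2 b3)" for b1 b2 b3 using Y1[of False] by simp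
  have Y1T: "h1 1 (s1 (of_bool b1) (of_bool b2) (of_bool b3)) = of_bool (xx1 w True b2 b3)" for b1 b2 b3 using Y1[of True] by simp
  have Y2F: "h2 0 (s2 (of_bool b1) (of_bool b2) (of_bool b3)) = of_bool (xx2 w b1 False b3)" for b1 b2 b3 using Y2[of False] by simp
  have Y3F: "h3 0 (s3 (of_bool b1) (of_bool b2) (of_bool b3)) = of_bool (xx3 w b1 b2 False)" for b1 b2 b3 using Y3[of False] by simp
  have Y3T: "h3 1 (s3 (of_bool b1) (of_bool b2) (of_bool b3)) = of_bool (xx3 w b1 b2 True)" for b1 b2 b3 using Y3[of True] by simp
  have mofb: "1 - of_bool x = (of_bool (\<not> x) :: nat)" for x by (cases x) simp_all
  have hr: "\<forall>i\<in>I1. h1 c i \<in> binset" "\<forall>i\<in>I2. h2 c i \<in> binset" "\<forall>i\<in>I3. h3 c i \<in> binset" if "c \<in> binset" for c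
    using h1 h2 h3 that by auto
  have "\<exists>!b. case b of (b1,b2,b3) \<Rightarrow> of_bool b1 = h1 1 (s1 (of_bool b1) (of_bool b2) (of_bool b3)) \<and>
        of_bool b2 = h2 0 (s2 (of_bool b1) (of_bool b2) (of_bool b3)) \<and> of_bool b3 = h3 0 (s3 (of_bool b1) (of_bool b2) (of_bool b3))"
    by (rule P) (use hr binI in auto)
  hence T1: "\<exists>!a. case a of (a1,a2,a3) \<Rightarrow> a1 = xx1 w True a2 a3 \<and> a2 = xx2 w a1 False a3 \<and> a3 = xx3 w a1 a2 False"
    by (simp only: Y1T Y2F Y3F of_bool_eq_iff)
  have "\<exists>!b. case b of (b1,b2,b3) \<Rightarrow> of_bool b1 = 1 - h1 1 (s1 (of_bool b1) (of_bool b2) (of_bool b3)) \<and>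
        of_bool b2 = 1 - h2 0 (s2 (of_bool b1) (of_bool b2) (of_bool b3)) \<and> of_bool b3 = 1 - h3 0 (s3 (of_bool b1) (of_bool b2) (of_bool b3))"
    by (rule P[of "\<lambda>i. 1 - h1 1 i" "\<lambda>i. 1 - h2 0 i" "\<lambda>i. 1 - h3 0 i"]) (use hr binI in \<open>auto simp: binset_def\<close>)
  hence T2: "\<exists>!a. case a of (a1,a2,a3) \<Rightarrow> a1 = (\<not> xx1 w True a2 a3) \<and> a2 = (\<not> xx2 w a1 False a3) \<and> a3 = (\<not> xx3 w a1 a2 False)"
    by (simp only: Y1T Y2F Y3F mofb of_bool_eq_iff)
  have "\<exists>!b. case b of (b1,b2,b3) \<Rightarrow> of_bool b1 = (of_bool (h1 0 (s1 (of_bool b1) (of_bool b2) (of_bool b3)) = h1 1 (s1 (of_bool b1) (of_bool b2) (of_bool b3))) :: nat) \<and>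
        of_bool b2 = (0::nat) \<and> of_bool b3 = (of_bool (h3 0 (s3 (of_bool b1) (of_bool b2) (of_bool b3)) = h3 1 (s3 (of_bool b1) (of_bool b2) (of_bool b3))) :: nat)"
    by (rule P[of "\<lambda>i. of_bool (h1 0 i = h1 1 i)" "\<lambda>i. 0" "\<lambda>i. of_bool (h3 0 i = h3 1 i)"]) (use binI in auto)
  hence T3: "\<exists>!a. case a of (a1,a2,a3) \<Rightarrow> a1 = (xx1 w False a2 a3 = xx1 w True a2 a3) \<and> \<not> a2 \<and>
                 a3 = (xx3 w a1 a2 False = xx3 w a1 a2 True)"
    by (simp only: Y1T Y1F Y3F Y3T of_bool_eq_iff of_bool_eq_0_iff)
  show False by (rule comb[OF T1 T2 T3])
qed

lemma induced_tuple:
  "induced q1 q2 q3 p I1 I2 I3 O1 O2 O3 (x1,x2,x3) (a1,a2,a3) =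
   (\<Sum>i\<in>I1\<times>I2\<times>I3. \<Sum>u\<in>O1\<times>O2\<times>O3. q1 x1 (fst u) a1 (fst i) * q2 x2 (fst (snd u)) a2 (fst (snd i)) * q3 x3 (snd (snd u)) a3 (snd (snd i)) * p i u)"
  unfolding induced_def by (simp add: split_def)

lemma pos_in_sum: "finite S \<Longrightarrow> sum f S = (1::real) \<Longrightarrow> \<exists>s\<in>S. 0 < f s"
proof (rule ccontr)
  assume "finite S" "sum f S = 1" "\<not> (\<exists>s\<in>S. 0 < f s)"
  hence "sum f S \<le> 0" by (intro sum_nonpos) (auto simp: not_less)
  thus False using \<open>sum f S = 1\<close> by simp
qed

lemma li_pos:
  assumes "local_intervention q binset binset I Os" "finite Os" "a \<in> binset" "i \<in> I"
  shows "\<exists>z. z \<in> binset \<times> Os \<and> 0 < q (fst z) (snd z) a i"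
proof -
  have "(\<Sum>z\<in>binset \<times> Os. q (fst z) (snd z) a i) = 1"
    using assms(1,3,4) unfolding local_intervention_def cond_dist_def by (auto simp: split_def)
  hence "\<exists>z\<in>binset \<times> Os. 0 < q (fst z) (snd z) a i"
    by (rule pos_in_sum[rotated]) (use assms(2) in \<open>simp add: binset_def\<close>)
  thus ?thesis by blast
qed

lemma gyn_notin_DC: "gynin_corr \<notin> DC"
proof
  assume "gynin_corr \<in> DC"
  have "\<exists>p I1 I2 I3 O1 O2 O3 q1 q2 q3. realizes gynin_corr p I1 I2 I3 O1 O2 O3 q1 q2 q3 \<and>
           (\<exists>(J :: nat set) (lam :: nat \<Rightarrow> real) (\<omega> :: nat \<Rightarrow> vec3 \<Rightarrow> vec3).
              finite J \<and> (\<forall>j\<in>J. 0 \<le> lam j \<and> process_function (\<omega> j) I1 I2 I3 O1 O2 O3) \<and>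
              (\<Sum>j\<in>J. lam j) = 1 \<and>
              (\<forall>i\<in>I1 \<times> I2 \<times> I3. \<forall>u\<in>O1 \<times> O2 \<times> O3.
                  p i u = (\<Sum>j\<in>J. lam j * delta_proc (\<omega> j) i u)))"
    using \<open>gynin_corr \<in> DC\<close> unfolding DC_def by (rule CollectD)
  then obtain p I1 I2 I3 O1 O2 O3 q1 q2 q3 where R: "realizes gynin_corr p I1 I2 I3 O1 O2 O3 q1 q2 q3" and
    EX: "\<exists>(J :: nat set) (lam :: nat \<Rightarrow> real) (\<omega> :: nat \<Rightarrow> vec3 \<Rightarrow> vec3).
              finite J \<and> (\<forall>j\<in>J. 0 \<le> lam j \<and> process_function (\<omega> j) I1 I2 I3 O1 O2 O3) \<and>
              (\<Sum>j\<in>J. lam j) = 1 \<and>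
              (\<forall>i\<in>I1 \<times> I2 \<times> I3. \<forall>u\<in>O1 \<times> O2 \<times> O3.
                  p i u = (\<Sum>j\<in>J. lam j * delta_proc (\<omega> j) i u))"
    apply (elim exE) apply (erule conjE) apply (rule that) apply assumption+ done
  from EX obtain J :: "nat set" and lam :: "nat \<Rightarrow> real" and \<omega> :: "nat \<Rightarrow> vec3 \<Rightarrow> vec3" where H: "finite J \<and> (\<forall>j\<in>J. 0 \<le> lam j \<and> process_function (\<omega> j) I1 I2 I3 O1 O2 O3) \<and>
              (\<Sum>j\<in>J. lam j) = 1 \<and>
              (\<forall>i\<in>I1 \<times> I2 \<times> I3. \<forall>u\<in>O1 \<times> O2 \<times> O3.
                  p i u = (\<Sum>j\<in>J. lam j * delta_proc (\<omega> j) i u))"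
    by blast
  have J: "finite J" "\<forall>j\<in>J. 0 \<le> lam j \<and> process_function (\<omega> j) I1 I2 I3 O1 O2 O3" "(\<Sum>j\<in>J. lam j) = 1"
    using H by auto
  have pd: "\<forall>i\<in>I1 \<times> I2 \<times> I3. \<forall>u\<in>O1 \<times> O2 \<times> O3. p i u = (\<Sum>j\<in>J. lam j * delta_proc (\<omega> j) i u)"
    using H by blast
  have fin: "finite I1" "finite I2" "finite I3" "finite O1" "finite O2" "finite O3"
    and cp: "classical_process p I1 I2 I3 O1 O2 O3"
    and li: "local_intervention q1 binset binset I1 O1" "local_intervention q2 binset binset I2 O2" "local_intervention q3 binset binset I3 O3"
    and eq: "\<forall>x\<in>bitvec. \<forall>a\<in>bitvec. gynin_corr x a = induced q1 q2 q3 p I1 I2 I3 O1 O2 O3 x a"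
    using R unfolding realizes_def by auto
  obtain j0 where j0: "j0 \<in> J" "0 < lam j0" using pos_in_sum[OF J(1) J(3)] by blast
  have pf: "process_function (\<omega> j0) I1 I2 I3 O1 O2 O3" using J(2) j0(1) by blast
  have p0: "0 \<le> p i u" if "i \<in> I1\<times>I2\<times>I3" "u \<in> O1\<times>O2\<times>O3" for i u
    using cp[unfolded classical_process_def, THEN conjunct1] that unfolding cond_dist_def by blast
  have pj0: "0 < p (\<omega> j0 u) u" if u: "u \<in> O1\<times>O2\<times>O3" for u
  proof -
    have wu: "\<omega> j0 u \<in> I1\<times>I2\<times>I3" using pf u unfolding process_function_def by blast
    have "lam j0 * delta_proc (\<omega> j0) (\<omega> j0 u) u \<le> (\<Sum>j\<in>J. lam j * delta_proc (\<omega> j) (\<omega> j0 u) u)"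
      by (rule member_le_sum[OF j0(1) _ J(1)]) (use J(2) in \<open>auto simp: delta_proc_def\<close>)
    moreover have "p (\<omega> j0 u) u = (\<Sum>j\<in>J. lam j * delta_proc (\<omega> j) (\<omega> j0 u) u)"
      by (rule pd[rule_format, OF wu u])
    ultimately show ?thesis using j0(2) by (simp add: delta_proc_def)
  qed
  define z1 where "z1 = (\<lambda>a i. SOME z. z \<in> binset \<times> O1 \<and> 0 < q1 (fst z) (snd z) a i)"
  define z2 where "z2 = (\<lambda>a i. SOME z. z \<in> binset \<times> O2 \<and> 0 < q2 (fst z) (snd z) a i)"
  define z3 where "z3 = (\<lambda>a i. SOME z. z \<in> binset \<times> O3 \<and> 0 < q3 (fst z) (snd z) a i)"
  have z1: "z1 a i \<in> binset \<times> O1 \<and> 0 < q1 (fst (z1 a i)) (snd (z1 a i)) a i" if "a \<in> binset" "i \<in> I1" for a i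
    unfolding z1_def by (rule someI_ex) (rule li_pos[OF li(1) fin(4) that])
  have z2: "z2 a i \<in> binset \<times> O2 \<and> 0 < q2 (fst (z2 a i)) (snd (z2 a i)) a i" if "a \<in> binset" "i \<in> I2" for a i
    unfolding z2_def by (rule someI_ex) (rule li_pos[OF li(2) fin(5) that])
  have z3: "z3 a i \<in> binset \<times> O3 \<and> 0 < q3 (fst (z3 a i)) (snd (z3 a i)) a i" if "a \<in> binset" "i \<in> I3" for a i
    unfolding z3_def by (rule someI_ex) (rule li_pos[OF li(3) fin(6) that])
  show False
  proof (rule no_perfect[OF pf fin, of "\<lambda>a i. snd (z1 a i)" "\<lambda>a i. snd (z2 a i)" "\<lambda>a i. snd (z3 a i)"
        "\<lambda>a i. fst (z1 a i)" "\<lambda>a i. fst (z2 a i)" "\<lambda>a i. fst (z3 a i)"])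
    show "\<forall>a\<in>binset. \<forall>i\<in>I1. snd (z1 a i) \<in> O1" using z1 by (auto simp: mem_Times_iff)
    show "\<forall>a\<in>binset. \<forall>i\<in>I2. snd (z2 a i) \<in> O2" using z2 by (auto simp: mem_Times_iff)
    show "\<forall>a\<in>binset. \<forall>i\<in>I3. snd (z3 a i) \<in> O3" using z3 by (auto simp: mem_Times_iff)
    show "\<forall>a\<in>binset. \<forall>i\<in>I1. fst (z1 a i) \<in> binset" using z1 by (auto simp: mem_Times_iff)
    show "\<forall>a\<in>binset. \<forall>i\<in>I2. fst (z2 a i) \<in> binset" using z2 by (auto simp: mem_Times_iff)
    show "\<forall>a\<in>binset. \<forall>i\<in>I3. fst (z3 a i) \<in> binset" using z3 by (auto simp: mem_Times_iff)
  next
    fix a1 a2 a3 u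
    assume a: "a1 \<in> binset" "a2 \<in> binset" "a3 \<in> binset" and u: "u \<in> O1 \<times> O2 \<times> O3"
      and fx: "u = (snd (z1 a1 (fst (\<omega> j0 u))), snd (z2 a2 (fst (snd (\<omega> j0 u)))), snd (z3 a3 (snd (snd (\<omega> j0 u)))))"
    define i where "i = \<omega> j0 u"
    have i: "i \<in> I1\<times>I2\<times>I3" using pf u unfolding process_function_def i_def by blast
    define x1 where "x1 = fst (z1 a1 (fst i))"
    define x2 where "x2 = fst (z2 a2 (fst (snd i)))"
    define x3 where "x3 = fst (z3 a3 (snd (snd i)))"
    have Z1: "z1 a1 (fst i) \<in> binset \<times> O1 \<and> 0 < q1 (fst (z1 a1 (fst i))) (snd (z1 a1 (fst i))) a1 (fst i)"
      using z1 a i by (auto simp: mem_Times_iff)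
    have Z2: "z2 a2 (fst (snd i)) \<in> binset \<times> O2 \<and> 0 < q2 (fst (z2 a2 (fst (snd i)))) (snd (z2 a2 (fst (snd i)))) a2 (fst (snd i))"
      using z2 a i by (auto simp: mem_Times_iff)
    have Z3: "z3 a3 (snd (snd i)) \<in> binset \<times> O3 \<and> 0 < q3 (fst (z3 a3 (snd (snd i)))) (snd (z3 a3 (snd (snd i)))) a3 (snd (snd i))"
      using z3 a i by (auto simp: mem_Times_iff)
    have u1: "fst u = snd (z1 a1 (fst i))" and u2: "fst (snd u) = snd (z2 a2 (fst (snd i)))" and u3: "snd (snd u) = snd (z3 a3 (snd (snd i)))"
      using fx unfolding i_def by (metis fst_conv snd_conv)+
    have T: "0 < q1 x1 (fst u) a1 (fst i) * q2 x2 (fst (snd u)) a2 (fst (snd i)) * q3 x3 (snd (snd u)) a3 (snd (snd i)) * p i u"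
      using Z1 Z2 Z3 pj0[OF u] unfolding x1_def x2_def x3_def u1 u2 u3 i_def by simp
    have xb: "x1 \<in> binset" "x2 \<in> binset" "x3 \<in> binset" using Z1 Z2 Z3 unfolding x1_def x2_def x3_def by (auto simp: mem_Times_iff)
    have qnn: "0 \<le> q1 x1 (fst u') a1 (fst i') * q2 x2 (fst (snd u')) a2 (fst (snd i')) * q3 x3 (snd (snd u')) a3 (snd (snd i')) * p i' u'"
      if "i' \<in> I1\<times>I2\<times>I3" "u' \<in> O1\<times>O2\<times>O3" for i' u'
      using that xb a li p0[OF that]
      by (intro mult_nonneg_nonneg li_nonneg[where q=q1] li_nonneg[where q=q2] li_nonneg[where q=q3]) (auto simp: mem_Times_iff)
    have "q1 x1 (fst u) a1 (fst i) * q2 x2 (fst (snd u)) a2 (fst (snd i)) * q3 x3 (snd (snd u)) a3 (snd (snd i)) * p i u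
        \<le> (\<Sum>u'\<in>O1\<times>O2\<times>O3. q1 x1 (fst u') a1 (fst i) * q2 x2 (fst (snd u')) a2 (fst (snd i)) * q3 x3 (snd (snd u')) a3 (snd (snd i)) * p i u')"
      by (rule member_le_sum[OF u]) (use qnn i fin in auto)
    also have "\<dots> \<le> (\<Sum>i'\<in>I1\<times>I2\<times>I3. \<Sum>u'\<in>O1\<times>O2\<times>O3. q1 x1 (fst u') a1 (fst i') * q2 x2 (fst (snd u')) a2 (fst (snd i')) * q3 x3 (snd (snd u')) a3 (snd (snd i')) * p i' u')"
      by (rule member_le_sum[OF i, where f="\<lambda>i'. \<Sum>u'\<in>O1\<times>O2\<times>O3. q1 x1 (fst u') a1 (fst i') * q2 x2 (fst (snd u')) a2 (fst (snd i')) * q3 x3 (snd (snd u')) a3 (snd (snd i')) * p i' u'"])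
         (use qnn fin in \<open>auto intro!: sum_nonneg\<close>)
    also have "\<dots> = induced q1 q2 q3 p I1 I2 I3 O1 O2 O3 (x1,x2,x3) (a1,a2,a3)"
      by (rule induced_tuple[symmetric])
    also have "\<dots> = gynin_corr (x1,x2,x3) (a1,a2,a3)"
      using xb a by (intro eq[rule_format, symmetric]) (auto simp: bitvec_def)
    finally have "0 < gynin_corr (x1,x2,x3) (a1,a2,a3)" using T by linarith
    hence "(x1,x2,x3) \<in> {(a3,a1,a2),(bar a3,bar a1,bar a2)}"
      by (auto simp: gynin_corr_def split: if_splits)
    thus "(fst (z1 a1 (fst (\<omega> j0 u))), fst (z2 a2 (fst (snd (\<omega> j0 u)))), fst (z3 a3 (snd (snd (\<omega> j0 u)))))
        \<in> {(a3, a1, a2), (bar a3, bar a1, bar a2)}"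
      unfolding x1_def x2_def x3_def i_def .
  qed
qed


theorem theorem10:
  shows "p_gynin gynin_corr = 1 \<and>
         realizes gynin_corr BFW binset binset binset binset binset binset copy_int copy_int copy_int \<and>
         gynin_corr \<in> PC \<and> gynin_corr \<notin> DC \<and> DC \<subset> PC"
proof -
  have inPC: "gynin_corr \<in> PC"
    unfolding PC_def mem_Collect_eq by (intro exI) (rule realizes_gyn)
  have sub: "DC \<subseteq> PC"
  proof
    fix P assume "P \<in> DC"
    thus "P \<in> PC" unfolding DC_def PC_def mem_Collect_eq
      by (elim exE conjE) (intro exI, assumption)
  qed
  have "DC \<subset> PC" using sub inPC gyn_notin_DC by blast
  thus ?thesis using pg realizes_gyn inPC gyn_notin_DC by blast
qed

end
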